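(* Let $\mathbb{X},\mathbb{Y}$ be finite-dimensional real Banach spaces, $T\in\mathbb{L}(\mathbb{X},\mathbb{Y})$, and let $F$ be a face of $B_{\mathbb{X}}$ with $T(F)\neq\{0\}$. Then $T$ preserves parallel pairs contained in $F$ (i.e. $(Tx,Ty)$ is a parallel pair in $\mathbb{Y}$ for all $x,y\in F$) if and only if one of the following holds: (i) $\dim(\mathrm{span}\,T(F))=1$; (ii) there exists $u\in F$ such that $J(Tu)\subset J(Tv)$ for all $v\in F\setminus\ker T$.
   Context: A face of $B_{\mathbb{X}}$ is a nonempty convex subset $F\subset S_{\mathbb{X}}$ such that whenever $x_1,x_2\in S_{\mathbb{X}}$, $0<t<1$ and $(1-t)x_1+tx_2\in F$, then $x_1,x_2\in F$. For non-zero $y$, $J(y)=\{g\in S_{\mathbb{Y}^*}: g(y)=\|y\|\}$. $(x,y)$ is a parallel pair if $\|x+\lambda y\|=\|x\|+\|y\|$ for some scalar $\lambda$ with $|\lambda|=1$. *)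

theory Defs
  imports "HOL-Analysis.Analysis"
begin

text \<open>Finite-dimensional real normed space (such a space is automatically Banach).\<close>
definition fin_dim_space :: "'a::real_normed_vector itself \<Rightarrow> bool" where
  "fin_dim_space _ \<longleftrightarrow> (\<exists>B::'a set. finite B \<and> span B = UNIV)"

definition face_of_ball :: "'a::real_normed_vector set \<Rightarrow> bool" where
  "face_of_ball F \<longleftrightarrow> F \<noteq> {} \<and> convex F \<and> F \<subseteq> sphere 0 1 \<and>
     (\<forall>x1\<in>sphere 0 1. \<forall>x2\<in>sphere 0 1. \<forall>t::real. 0 < t \<and> t < 1 \<and>
        (1 - t) *\<^sub>R x1 + t *\<^sub>R x2 \<in> F \<longrightarrow> x1 \<in> F \<and> x2 \<in> F)"

text \<open>Duality map: norm-one continuous linear functionals attaining the norm at y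
  (used only for nonzero y).\<close>
definition Jmap :: "'b::real_normed_vector \<Rightarrow> ('b \<Rightarrow> real) set" where
  "Jmap y = {g. bounded_linear g \<and> onorm g = 1 \<and> g y = norm y}"

definition parallel_pair :: "'a::real_normed_vector \<Rightarrow> 'a \<Rightarrow> bool" where
  "parallel_pair x y \<longleftrightarrow> (\<exists>c::real. \<bar>c\<bar> = 1 \<and> norm (x + c *\<^sub>R y) = norm x + norm y)"

end

theory Submission
  imports Defs
begin

definition lin_on :: "'b::real_vector set \<Rightarrow> ('b \<Rightarrow> real) \<Rightarrow> bool" where
  "lin_on V g \<longleftrightarrow> (\<forall>x\<in>V. \<forall>y\<in>V. g (x + y) = g x + g y) \<and> (\<forall>c. \<forall>x\<in>V. g (c *\<^sub>R x) = c * g x)"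

lemma hb_step:
  fixes V :: "'b::real_normed_vector set"
  assumes sV: "subspace V" and lg: "lin_on V g" and bd: "\<forall>v\<in>V. g v \<le> norm v"
  shows "\<exists>g'. lin_on (span (insert x V)) g' \<and> (\<forall>v\<in>span (insert x V). g' v \<le> norm v) \<and> (\<forall>v\<in>V. g' v = g v)"
proof (cases "x \<in> V")
  case True
  then have "span (insert x V) = V" using sV by (simp add: insert_absorb span_eq_iff)
  then show ?thesis using lg bd by auto
next
  case False
  have spanV: "span V = V" using sV by (simp add: span_eq_iff)
  have ins: "span (insert x V) = {z. \<exists>k. z - k *\<^sub>R x \<in> V}" using span_insert[of x V] spanV by simp
  have uniq: "k = k'" if "z - k *\<^sub>R x \<in> V" "z - k' *\<^sub>R x \<in> V" for z k k'
  proof (rule ccontr)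
    assume kk: "k \<noteq> k'"
    have "(z - k' *\<^sub>R x) - (z - k *\<^sub>R x) \<in> V" using that sV subspace_diff by blast
    hence "(k - k') *\<^sub>R x \<in> V" by (simp add: algebra_simps)
    hence "(1/(k-k')) *\<^sub>R ((k - k') *\<^sub>R x) \<in> V" using sV subspace_scale by blast
    hence "x \<in> V" using kk by simp
    thus False using False by simp
  qed
  have zero: "0 \<in> V" using sV subspace_0 by blast
  have key: "g w - norm (w - x) \<le> norm (v + x) - g v" if "w\<in>V" "v\<in>V" for v w
  proof -
    have "g w + g v = g (w + v)" using lg that unfolding lin_on_def by auto
    also have "... \<le> norm (w + v)" using bd that sV subspace_add by blast
    also have "... \<le> norm (w - x) + norm (v + x)" using norm_triangle_ineq[of "w - x" "v + x"] by simp
    finally show ?thesis by simp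
  qed
  define A where "A = (\<lambda>w. g w - norm (w - x)) ` V"
  have Ane: "A \<noteq> {}" using zero A_def by auto
  have Abd: "bdd_above A" unfolding A_def bdd_above_def using key zero by blast
  define \<kappa> where "\<kappa> = Sup A"
  have k1: "g w - norm (w - x) \<le> \<kappa>" if "w\<in>V" for w
    unfolding \<kappa>_def by (rule cSup_upper) (use that A_def Abd in auto)
  have k2: "\<kappa> \<le> norm (v + x) - g v" if "v\<in>V" for v
    unfolding \<kappa>_def by (rule cSup_least) (use that A_def Ane key in auto)
  define r where "r z = (SOME k. z - k *\<^sub>R x \<in> V)" for z
  have r: "r (v + t *\<^sub>R x) = t" if "v \<in> V" for v t
    unfolding r_def
  proof (rule someI2[where a=t])
    show "v + t *\<^sub>R x - t *\<^sub>R x \<in> V" using that by simp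
  next
    fix k assume "v + t *\<^sub>R x - k *\<^sub>R x \<in> V"
    thus "k = t" using uniq[of "v + t *\<^sub>R x" k t] that by simp
  qed
  define g' where "g' z = g (z - r z *\<^sub>R x) + r z * \<kappa>" for z
  have g'v: "g' (v + t *\<^sub>R x) = g v + t * \<kappa>" if "v\<in>V" for v t
    using r[OF that] unfolding g'_def by simp
  have repr: "\<exists>v t. v\<in>V \<and> z = v + t *\<^sub>R x" if zin: "z \<in> span (insert x V)" for z
  proof -
    obtain k where "z - k *\<^sub>R x \<in> V" using zin ins by auto
    thus ?thesis by (intro exI[of _ "z - k *\<^sub>R x"] exI[of _ k]) simp
  qed
  have lin: "lin_on (span (insert x V)) g'"
    unfolding lin_on_def
  proof (intro conjI ballI allI)
    fix z1 z2 assume "z1 \<in> span (insert x V)" "z2 \<in> span (insert x V)"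
    then obtain v1 t1 v2 t2 where v: "v1\<in>V" "v2\<in>V" "z1 = v1 + t1 *\<^sub>R x" "z2 = v2 + t2 *\<^sub>R x"
      using repr by blast
    have "z1 + z2 = (v1 + v2) + (t1 + t2) *\<^sub>R x" using v by (simp add: algebra_simps)
    moreover have "v1 + v2 \<in> V" using v sV subspace_add by blast
    ultimately have "g' (z1 + z2) = g (v1 + v2) + (t1 + t2) * \<kappa>" using g'v by simp
    also have "... = g' z1 + g' z2" using v g'v lg unfolding lin_on_def by (simp add: algebra_simps)
    finally show "g' (z1 + z2) = g' z1 + g' z2" .
  next
    fix c z1 assume "z1 \<in> span (insert x V)"
    then obtain v1 t1 where v: "v1\<in>V" "z1 = v1 + t1 *\<^sub>R x"
      using repr by blast
    have "c *\<^sub>R z1 = (c *\<^sub>R v1) + (c * t1) *\<^sub>R x" using v by (simp add: algebra_simps)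
    moreover have "c *\<^sub>R v1 \<in> V" using v sV subspace_scale by blast
    ultimately have "g' (c *\<^sub>R z1) = g (c *\<^sub>R v1) + (c * t1) * \<kappa>" using g'v by simp
    also have "... = c * g' z1" using v g'v lg unfolding lin_on_def by (simp add: algebra_simps)
    finally show "g' (c *\<^sub>R z1) = c * g' z1" .
  qed
  have bnd: "g' z \<le> norm z" if zin: "z \<in> span (insert x V)" for z
  proof -
    obtain v t where v: "v\<in>V" "z = v + t *\<^sub>R x" using repr zin by blast
    have gs: "g ((1/s) *\<^sub>R v) = (1/s) * g v" for s using lg v unfolding lin_on_def by blast
    have vs: "(1/s) *\<^sub>R v \<in> V" for s using v sV subspace_scale by blast
    consider "t = 0" | "t > 0" | "t < 0" by linarith
    then have "g v + t * \<kappa> \<le> norm (v + t *\<^sub>R x)"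
    proof cases
      case 1 thus ?thesis using bd v by simp
    next
      case 2
      have eq: "(1/t) *\<^sub>R v + x = (1/t) *\<^sub>R (v + t *\<^sub>R x)" using 2 by (simp add: algebra_simps)
      have eqn: "norm ((1/t) *\<^sub>R v + x) = norm (v + t *\<^sub>R x) / t" unfolding eq using 2 by simp
      have "\<kappa> \<le> norm ((1/t) *\<^sub>R v + x) - (1/t) * g v" using k2[OF vs[of t]] gs by simp
      hence "\<kappa> \<le> (norm (v + t *\<^sub>R x) - g v) / t" unfolding eqn using 2 by (simp add: field_simps)
      hence "t * \<kappa> \<le> norm (v + t *\<^sub>R x) - g v" using 2 by (simp add: field_simps)
      thus ?thesis by simp
    next
      case 3
      define s where "s = -t"
      have s: "s > 0" using 3 s_def by simp
      have eq: "(1/s) *\<^sub>R v - x = (1/s) *\<^sub>R (v + t *\<^sub>R x)" using s s_def by (simp add: algebra_simps)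
      have eqn: "norm ((1/s) *\<^sub>R v - x) = norm (v + t *\<^sub>R x) / s" unfolding eq using s by simp
      have "(1/s) * g v - norm ((1/s) *\<^sub>R v - x) \<le> \<kappa>" using k1[OF vs[of s]] gs by simp
      hence "(g v - norm (v + t *\<^sub>R x)) / s \<le> \<kappa>" unfolding eqn using s by (simp add: field_simps)
      hence "g v - norm (v + t *\<^sub>R x) \<le> s * \<kappa>" using s by (simp add: field_simps)
      thus ?thesis using s_def by simp
    qed
    thus ?thesis using g'v v by simp
  qed
  have agree: "g' v = g v" if "v \<in> V" for v using g'v[OF that, of 0] by simp
  show ?thesis using lin bnd agree by blast
qed
lemma hb_base:
  fixes y :: "'b::real_normed_vector"
  assumes "y \<noteq> 0"
  shows "\<exists>g. lin_on (span {y}) g \<and> (\<forall>v\<in>span {y}. g v \<le> norm v) \<and> g y = norm y"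
proof -
  have u: "k = k'" if "k *\<^sub>R y = k' *\<^sub>R y" for k k' using that assms by simp
  define g where "g z = (SOME k. z = k *\<^sub>R y) * norm y" for z
  have gk: "g (k *\<^sub>R y) = k * norm y" for k
    unfolding g_def by (rule arg_cong[where f="\<lambda>c. c * norm y"], rule someI2[where a=k]) (use u in auto)
  have sp: "span {y} = range (\<lambda>k. k *\<^sub>R y)" by (simp add: span_singleton)
  have "lin_on (span {y}) g" unfolding lin_on_def sp
  proof (intro conjI ballI allI)
    fix a b assume "a \<in> range (\<lambda>k. k *\<^sub>R y)" "b \<in> range (\<lambda>k. k *\<^sub>R y)"
    then obtain ka kb where "a = ka *\<^sub>R y" "b = kb *\<^sub>R y" by blast
    moreover have "ka *\<^sub>R y + kb *\<^sub>R y = (ka + kb) *\<^sub>R y" by (simp add: scaleR_add_left)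
    ultimately show "g (a + b) = g a + g b" by (simp add: gk distrib_right)
  next
    fix c a assume "a \<in> range (\<lambda>k. k *\<^sub>R y)"
    then obtain ka where "a = ka *\<^sub>R y" by blast
    thus "g (c *\<^sub>R a) = c * g a" by (simp add: gk)
  qed
  moreover have "\<forall>v\<in>span {y}. g v \<le> norm v" unfolding sp by (auto simp: gk mult_right_mono)
  moreover have "g y = norm y" using gk[of 1] by simp
  ultimately show ?thesis by blast
qed

lemma hb_fin:
  fixes y :: "'b::real_normed_vector"
  assumes fd: "fin_dim_space TYPE('b)" and y: "y \<noteq> 0"
  shows "\<exists>g. bounded_linear g \<and> onorm g = 1 \<and> g y = norm y"
proof -
  obtain B :: "'b set" where B: "finite B" "span B = UNIV" using fd unfolding fin_dim_space_def by blast
  have that_fact: "\<exists>g. lin_on (span (insert y C)) g \<and> (\<forall>v\<in>span (insert y C). g v \<le> norm v) \<and> g y = norm y"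
    if "finite C" for C
    using that
  proof (induction C rule: finite_induct)
    case empty
    then show ?case using hb_base[OF y] by simp
  next
    case (insert b C)
    then obtain g where g: "lin_on (span (insert y C)) g" "\<forall>v\<in>span (insert y C). g v \<le> norm v" "g y = norm y"
      by blast
    obtain g' where g': "lin_on (span (insert b (span (insert y C)))) g'"
       "\<forall>v\<in>span (insert b (span (insert y C))). g' v \<le> norm v" "\<forall>v\<in>span (insert y C). g' v = g v"
      using hb_step[OF subspace_span g(1) g(2)] by blast
    have eq0: "span (insert b (span (insert y C))) = span (insert b (insert y C))"
      by (simp only: span_insert[of b] span_span)
    have eq: "span (insert b (span (insert y C))) = span (insert y (insert b C))"
      unfolding eq0 by (simp add: insert_commute)
    have "g' y = norm y" using g'(3) g(3) span_base[of y "insert y C"] by simp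
    then show ?case using g' eq by auto
  qed
  have U: "span (insert y B) = UNIV" using B(2) span_mono[of B "insert y B"] by auto
  from that_fact[OF B(1)] obtain g where g: "lin_on UNIV g" "\<forall>v. g v \<le> norm v" "g y = norm y"
    using U by auto
  have add: "g (a + b) = g a + g b" for a b using g(1) unfolding lin_on_def by blast
  have sc: "g (c *\<^sub>R a) = c * g a" for c a using g(1) unfolding lin_on_def by blast
  have ab: "norm (g a) \<le> norm a * 1" for a
  proof -
    have "- g a = g ((-1) *\<^sub>R a)" using sc[of "-1" a] by simp
    also have "... \<le> norm a" using spec[OF g(2), of "-a"] by simp
    finally show ?thesis using spec[OF g(2), of a] by simp
  qed
  have bl: "bounded_linear g"
    by (rule bounded_linear_intro[where K=1]) (simp_all add: add sc, use ab[simplified] in auto)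
  have le: "onorm g \<le> 1" by (rule onorm_bound) (use ab in auto)
  have "norm (g y) \<le> onorm g * norm y" by (rule onorm[OF bl])
  hence "1 \<le> onorm g" using g(3) y by simp
  thus ?thesis using le bl g(3) by auto
qed

lemma conv_comb0:
  fixes S :: "'a::real_vector set"
  assumes cS: "convex S" and fC: "finite C" and C0: "0 \<notin> C" and p0: "p0 \<in> S"
    and CS: "\<forall>c\<in>C. p0 + c \<in> S" and lpos: "\<forall>c\<in>C. 0 \<le> l c" and lsum: "sum l C \<le> 1"
  shows "p0 + (\<Sum>c\<in>C. l c *\<^sub>R c) \<in> S"
proof -
  define w where "w j = (if j = 0 then 1 - sum l C else l j)" for j
  have sC: "sum w C = sum l C" unfolding w_def using C0 by (intro sum.cong) auto
  have s1: "sum w (insert 0 C) = 1" using fC C0 sC by (simp add: w_def)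
  have "(\<Sum>j\<in>insert 0 C. w j *\<^sub>R (p0 + j)) \<in> S"
    by (rule convex_sum[OF _ cS s1]) (use fC lpos lsum CS p0 in \<open>auto simp: w_def\<close>)
  also have "(\<Sum>j\<in>insert 0 C. w j *\<^sub>R (p0 + j)) = (\<Sum>j\<in>insert 0 C. w j) *\<^sub>R p0 + (\<Sum>j\<in>insert 0 C. w j *\<^sub>R j)"
    by (simp add: scaleR_add_right sum.distrib scaleR_sum_left)
  also have "(\<Sum>j\<in>insert 0 C. w j *\<^sub>R j) = (\<Sum>c\<in>C. l c *\<^sub>R c)"
    using fC C0 by (simp add: w_def) (intro sum.cong, auto)
  finally show ?thesis using s1 by simp
qed

lemma relint_pt:
  fixes S B :: "'a::real_vector set"
  assumes fB: "finite B" and sB: "span B = UNIV" and cS: "convex S" and ne: "S \<noteq> {}"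
  shows "\<exists>u\<in>S. \<forall>v\<in>S. \<exists>\<delta>>0. u + \<delta> *\<^sub>R (u - v) \<in> S"
proof -
  obtain p0 where p0: "p0 \<in> S" using ne by blast
  define D where "D = (\<lambda>v. v - p0) ` S"
  obtain C where C: "C \<subseteq> D" "independent C" "D \<subseteq> span C" by (rule maximal_independent_subset)
  have fC: "finite C" using independent_span_bound[OF fB C(2)] sB by auto
  have C0: "0 \<notin> C" using C(2) dependent_zero by blast
  have CS: "\<forall>c\<in>C. p0 + c \<in> S" using C(1) D_def by auto
  define n where "n = card C"
  define u where "u = p0 + (\<Sum>c\<in>C. (1 / (real n + 1)) *\<^sub>R c)"
  have uS: "u \<in> S" unfolding u_def
    by (rule conv_comb0[OF cS fC C0 p0 CS]) (auto simp: n_def)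
  have "\<exists>\<delta>>0. u + \<delta> *\<^sub>R (u - v) \<in> S" if vS: "v \<in> S" for v
  proof -
    have "v - p0 \<in> span C" using vS C(3) D_def by auto
    then obtain \<mu> where mu: "v - p0 = (\<Sum>c\<in>C. \<mu> c *\<^sub>R c)" using span_finite[OF fC] by auto
    define M where "M = (\<Sum>c\<in>C. \<bar>\<mu> c\<bar>)"
    have M0: "M \<ge> 0" unfolding M_def by (simp add: sum_nonneg)
    have muM: "\<bar>\<mu> c\<bar> \<le> M" if "c \<in> C" for c
      unfolding M_def using fC that by (intro member_le_sum) auto
    have smu: "- (\<Sum>c\<in>C. \<mu> c) \<le> M" unfolding M_def
      using sum_mono[of C "\<lambda>c. - \<mu> c" "\<lambda>c. \<bar>\<mu> c\<bar>"] by (simp add: sum_negf)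
    define \<delta> where "\<delta> = 1 / ((real n + 1) * (M + 1))"
    have d0: "\<delta> > 0" unfolding \<delta>_def using M0 by simp
    define l where "l c = (1 + \<delta>) / (real n + 1) - \<delta> * \<mu> c" for c
    have dM: "\<delta> * M \<le> 1 / (real n + 1)"
    proof -
      have e: "\<delta> * M = (1 / (real n + 1)) * (M / (M + 1))" unfolding \<delta>_def by simp
      have "M / (M + 1) \<le> 1" using M0 by simp
      hence "(1 / (real n + 1)) * (M / (M + 1)) \<le> (1 / (real n + 1)) * 1" by (intro mult_left_mono) auto
      thus ?thesis using e by simp
    qed
    have lpos: "\<forall>c\<in>C. 0 \<le> l c"
    proof
      fix c assume "c \<in> C"
      have "\<delta> * \<mu> c \<le> \<delta> * M" using muM[OF \<open>c\<in>C\<close>] d0 by (intro mult_left_mono) auto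
      moreover have "1 / (real n + 1) \<le> (1 + \<delta>) / (real n + 1)" using d0 by (simp add: divide_right_mono)
      ultimately show "0 \<le> l c" unfolding l_def using dM by linarith
    qed
    have lsum: "sum l C \<le> 1"
    proof -
      have "sum l C = real n * ((1 + \<delta>) / (real n + 1)) - \<delta> * (\<Sum>c\<in>C. \<mu> c)"
        unfolding l_def n_def by (simp add: sum_subtractf sum_distrib_left)
      also have "... \<le> real n * ((1 + \<delta>) / (real n + 1)) + \<delta> * M"
        using smu d0 mult_left_mono[OF smu, of \<delta>] by simp
      also have "... = real n / (real n + 1) + \<delta> * (real n / (real n + 1) + M)"
      proof -
        have "real n * ((1 + \<delta>) / (real n + 1)) = real n / (real n + 1) + \<delta> * (real n / (real n + 1))"
          by (simp add: add_divide_distrib distrib_left)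
        thus ?thesis by (simp add: distrib_left)
      qed
      also have "... \<le> real n / (real n + 1) + \<delta> * (1 + M)"
        using d0 by (intro add_left_mono mult_left_mono) auto
      also have "\<delta> * (1 + M) = 1 / (real n + 1)" unfolding \<delta>_def using M0 by (simp add: add.commute)
      also have "real n / (real n + 1) + 1 / (real n + 1) = 1" by (simp add: field_simps)
      finally show ?thesis .
    qed
    have "u + \<delta> *\<^sub>R (u - v) = p0 + (1 + \<delta>) *\<^sub>R (u - p0) - \<delta> *\<^sub>R (v - p0)"
      by (simp add: algebra_simps)
    also have "... = p0 + (\<Sum>c\<in>C. l c *\<^sub>R c)"
      unfolding u_def mu l_def
      by (simp add: scaleR_sum_right scaleR_diff_left sum_subtractf)
    finally have "u + \<delta> *\<^sub>R (u - v) = p0 + (\<Sum>c\<in>C. l c *\<^sub>R c)" .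
    moreover have "p0 + (\<Sum>c\<in>C. l c *\<^sub>R c) \<in> S" by (rule conv_comb0[OF cS fC C0 p0 CS lpos lsum])
    ultimately show ?thesis using d0 by auto
  qed
  thus ?thesis using uS by blast
qed

lemma scaled_add:
  fixes a b :: "'b::real_normed_vector"
  assumes h: "norm (a + b) = norm a + norm b" and al: "0 \<le> \<alpha>" and be: "0 \<le> \<beta>"
  shows "norm (\<alpha> *\<^sub>R a + \<beta> *\<^sub>R b) = \<alpha> * norm a + \<beta> * norm b"
proof -
  have le: "norm (\<alpha> *\<^sub>R a + \<beta> *\<^sub>R b) \<le> \<alpha> * norm a + \<beta> * norm b"
    using norm_triangle_ineq[of "\<alpha> *\<^sub>R a" "\<beta> *\<^sub>R b"] al be by simp
  have ge: "\<alpha> * norm a + \<beta> * norm b \<le> norm (\<alpha> *\<^sub>R a + \<beta> *\<^sub>R b)"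
  proof (cases "\<beta> \<le> \<alpha>")
    case True
    have "\<alpha> *\<^sub>R (a + b) = (\<alpha> *\<^sub>R a + \<beta> *\<^sub>R b) + (\<alpha> - \<beta>) *\<^sub>R b" by (simp add: algebra_simps)
    hence "norm (\<alpha> *\<^sub>R (a + b)) \<le> norm (\<alpha> *\<^sub>R a + \<beta> *\<^sub>R b) + norm ((\<alpha> - \<beta>) *\<^sub>R b)"
      by (metis norm_triangle_ineq)
    moreover have "norm (\<alpha> *\<^sub>R (a + b)) = \<alpha> * norm a + \<alpha> * norm b"
      using norm_scaleR[of "\<alpha>" "a + b"] h al by (simp add: distrib_left)
    moreover have "norm ((\<alpha> - \<beta>) *\<^sub>R b) = (\<alpha> - \<beta>) * norm b" using True by simp
    ultimately show ?thesis by (simp add: algebra_simps)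
  next
    case False
    have "\<beta> *\<^sub>R (a + b) = (\<alpha> *\<^sub>R a + \<beta> *\<^sub>R b) + (\<beta> - \<alpha>) *\<^sub>R a" by (simp add: algebra_simps)
    hence "norm (\<beta> *\<^sub>R (a + b)) \<le> norm (\<alpha> *\<^sub>R a + \<beta> *\<^sub>R b) + norm ((\<beta> - \<alpha>) *\<^sub>R a)"
      by (metis norm_triangle_ineq)
    moreover have "norm (\<beta> *\<^sub>R (a + b)) = \<beta> * norm a + \<beta> * norm b"
      using norm_scaleR[of "\<beta>" "a + b"] h be by (simp add: distrib_left)
    moreover have "norm ((\<beta> - \<alpha>) *\<^sub>R a) = (\<beta> - \<alpha>) * norm a" using False by simp
    ultimately show ?thesis by (simp add: algebra_simps)
  qed
  show ?thesis using le ge by simp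
qed

lemma par_cases:
  assumes "parallel_pair x y"
  shows "norm (x + y) = norm x + norm y \<or> norm (x - y) = norm x + norm y"
proof -
  obtain c :: real where c: "\<bar>c\<bar> = 1" "norm (x + c *\<^sub>R y) = norm x + norm y"
    using assms unfolding parallel_pair_def by blast
  hence "c = 1 \<or> c = -1" by linarith
  thus ?thesis using c by auto
qed

lemma indep_add:
  fixes a b :: "'b::real_normed_vector"
  assumes par: "\<And>t t'. t\<in>{0..1} \<Longrightarrow> t'\<in>{0..1} \<Longrightarrow> parallel_pair (a + t *\<^sub>R (b - a)) (a + t' *\<^sub>R (b - a))"
    and nz: "\<And>t. t\<in>{0..1} \<Longrightarrow> a + t *\<^sub>R (b - a) \<noteq> 0"
  shows "norm (a + b) = norm a + norm b"
proof -
  define m where "m t = a + t *\<^sub>R (b - a)" for t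
  have m0: "m 0 = a" and m1: "m 1 = b" unfolding m_def by simp_all
  have par': "parallel_pair (m t) (m t')" if "t\<in>{0..1}" "t'\<in>{0..1}" for t t'
    using par[OF that] unfolding m_def .
  have nz': "m t \<noteq> 0" if "t\<in>{0..1}" for t using nz[OF that] unfolding m_def .
  define s where "s = norm a"
  define r where "r = norm b"
  have s0: "s > 0" using nz'[of 0] m0 s_def by simp
  have r0: "r > 0" using nz'[of 1] m1 r_def by simp
  have mA: "(1 - \<beta>) *\<^sub>R a + \<beta> *\<^sub>R m t = m (\<beta> * t)" for \<beta> t
    unfolding m_def by (simp add: algebra_simps)
  have mB: "(1 - \<beta>) *\<^sub>R b + \<beta> *\<^sub>R m t = m ((1 - \<beta>) + \<beta> * t)" for \<beta> t
    unfolding m_def by (simp add: algebra_simps)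
  have lin: "(1 - x) + x * y = 1 - x * (1 - y)" for x y :: real by (simp add: algebra_simps)
  have mdiff: "m t - m t' = (t - t') *\<^sub>R (b - a)" for t t' unfolding m_def by (simp add: algebra_simps)
  from par_cases[OF par'[of 0 1]] m0 m1
  consider "norm (a + b) = norm a + norm b" | "norm (a - b) = norm a + norm b" by auto
  then show ?thesis
  proof cases
    case 1 then show ?thesis .
  next
    case 2
    define D where "D = s + r"
    have D0: "D > 0" using s0 r0 D_def by simp
    have nD: "norm (b - a) = D" using 2 D_def s_def r_def by (simp add: norm_minus_commute)
    have dist: "norm (m t - m t') = \<bar>t - t'\<bar> * D" for t t' using mdiff nD by simp
    define t0 where "t0 = s / D"
    have t0D: "t0 * D = s" unfolding t0_def using D0 by simp
    have t00: "0 < t0" "t0 < 1" unfolding t0_def using s0 r0 D_def by (simp_all add: field_simps)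
    define q where "q = norm (m t0)"
    have q0: "q > 0" using nz'[of t0] t00 q_def by simp
    define e where "e = min (q / (4 * D)) (min (t0 / 2) ((1 - t0) / 2))"
    have e0: "e > 0" unfolding e_def using q0 D0 t00 by simp
    have eq: "e * D \<le> q / 4" 
    proof -
      have "e \<le> q / (4 * D)" unfolding e_def by simp
      hence "e * D \<le> q / (4 * D) * D" by (rule mult_right_mono) (use D0 in auto)
      moreover have "q / (4 * D) * D = q / 4" using D0 by simp
      ultimately show ?thesis by linarith
    qed
    have et: "e \<le> t0 / 2" "e \<le> (1 - t0) / 2" unfolding e_def by (simp_all only: min_le_iff_disj) auto
    define t1 where "t1 = t0 + e"
    define t2 where "t2 = t0 - e"
    have t1r: "t1 \<in> {0..1}" "0 < t1" "t1 < 1" using et e0 t00 t1_def by auto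
    have t2r: "t2 \<in> {0..1}" "0 < t2" "t2 < 1" using et e0 t00 t2_def by auto
    have t12: "t2 < t1" using e0 t1_def t2_def by simp
    define f1 where "f1 = norm (m t1)"
    define f2 where "f2 = norm (m t2)"
    have C1: "norm (a + m t1) = norm a + norm (m t1)"
    proof (rule ccontr)
      assume nc: "\<not> ?thesis"
      have "norm (m 0 - m t1) = norm (m 0) + norm (m t1)"
        using par_cases[OF par'[of 0 t1]] nc m0 t1r by auto
      moreover have "norm (m 0 - m t1) = s + e * D"
      proof -
        have "norm (m 0 - m t1) = t1 * D" using dist[of 0 t1] t1r by simp
        also have "... = t0 * D + e * D" unfolding t1_def by (simp add: algebra_simps)
        finally show ?thesis using t0D by simp
      qed
      ultimately have "norm (m t1) = e * D" using m0 s_def by simp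
      moreover have "q \<le> norm (m t1) + norm (m t0 - m t1)" unfolding q_def
        by (metis norm_triangle_sub add.commute)
      moreover have "norm (m t0 - m t1) = e * D" using dist[of t0 t1] t1_def e0 by simp
      ultimately show False using eq q0 by linarith
    qed
    have C2: "norm (b + m t2) = norm b + norm (m t2)"
    proof (rule ccontr)
      assume nc: "\<not> ?thesis"
      have "norm (m 1 - m t2) = norm (m 1) + norm (m t2)"
        using par_cases[OF par'[of 1 t2]] nc m1 t2r by auto
      moreover have "norm (m 1 - m t2) = r + e * D"
      proof -
        have "norm (m 1 - m t2) = (1 - t2) * D" using dist[of 1 t2] t2r by simp
        also have "... = D - t0 * D + e * D" unfolding t2_def by (simp add: algebra_simps)
        finally show ?thesis using t0D D_def by simp
      qed
      ultimately have "norm (m t2) = e * D" using m1 r_def by simp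
      moreover have "q \<le> norm (m t2) + norm (m t0 - m t2)" unfolding q_def
        by (metis norm_triangle_sub add.commute)
      moreover have "norm (m t0 - m t2) = e * D" using dist[of t0 t2] t2_def e0 by simp
      ultimately show False using eq q0 by linarith
    qed
    have E1: "f2 = (1 - t2/t1) * s + (t2/t1) * f1"
    proof -
      have "m t2 = (1 - t2/t1) *\<^sub>R a + (t2/t1) *\<^sub>R m t1" using mA[of "t2/t1" t1] t1r by simp
      moreover have "t2/t1 \<le> 1" using t12 t1r by simp
      ultimately show ?thesis unfolding f2_def f1_def s_def
        using scaled_add[OF C1, of "1 - t2/t1" "t2/t1"] t2r t1r by simp
    qed
    have E2: "f1 = (1 - (1-t1)/(1-t2)) * r + ((1-t1)/(1-t2)) * f2"
    proof -
      have "(1 - (1-t1)/(1-t2)) + ((1-t1)/(1-t2)) * t2 = 1 - ((1-t1)/(1-t2)) * (1 - t2)"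
        by (rule lin)
      also have "((1-t1)/(1-t2)) * (1 - t2) = 1 - t1" using t2r by simp
      finally have "(1 - (1-t1)/(1-t2)) + ((1-t1)/(1-t2)) * t2 = t1" by simp
      hence "m t1 = (1 - (1-t1)/(1-t2)) *\<^sub>R b + ((1-t1)/(1-t2)) *\<^sub>R m t2" using mB[of "(1-t1)/(1-t2)" t2] by simp
      moreover have "(1-t1)/(1-t2) \<le> 1" using t12 t2r by simp
      moreover have "0 \<le> (1-t1)/(1-t2)" using t1r t2r by simp
      ultimately show ?thesis unfolding f2_def f1_def r_def
        using scaled_add[OF C2, of "1 - (1-t1)/(1-t2)" "(1-t1)/(1-t2)"] by simp
    qed
    have F1: "f1 = (1 - t1) * s + t1 * r"
    proof -
      obtain y where y: "y = t2/t1" by blast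
      have hy: "y * t1 = t2" using y t1r by simp
      obtain x where x: "x = (1-t1)/(1-t2)" by blast
      have hx: "x * (1 - t2) = 1 - t1" using x t2r by simp
      have e1: "t1 * f2 = (t1 - t2) * s + t2 * f1"
      proof -
        have "t1 * f2 = t1 * ((1 - y) * s + y * f1)" using E1 y by simp
        hence "t1 * f2 = t1 * s - (y * t1) * s + (y * t1) * f1" by (simp add: algebra_simps)
        thus ?thesis using hy by (simp add: algebra_simps)
      qed
      have e2: "(1 - t2) * f1 = (t1 - t2) * r + (1 - t1) * f2"
      proof -
        have "(1 - t2) * f1 = (1 - t2) * ((1 - x) * r + x * f2)" using E2 x by simp
        hence "(1 - t2) * f1 = (1 - t2) * r - (x * (1 - t2)) * r + (x * (1 - t2)) * f2" by (simp add: algebra_simps)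
        thus ?thesis unfolding hx by (simp add: algebra_simps)
      qed
      have "(t1 - t2) * f1 = (t1 - t2) * ((1 - t1) * s + t1 * r)"
        using e1 e2 by algebra
      thus ?thesis using t12 by simp
    qed
    have F2': "t1 * t1 * (f2 + s * t2) = t1 * t1 * (s + r * t2)" using E1 F1 t1r by (simp add: field_simps)
    hence "f2 + s * t2 = s + r * t2" using t1r by simp
    hence F2: "f2 = (1 - t2) * s + t2 * r" by (simp add: algebra_simps)
    have half: "norm (m (1/2)) = (s + r) / 2"
    proof (cases "1/2 \<le> t1")
      case True
      have "m (1/2) = (1 - 1/(2*t1)) *\<^sub>R a + (1/(2*t1)) *\<^sub>R m t1" using mA[of "1/(2*t1)" t1] t1r by simp
      moreover have "1/(2*t1) \<le> 1" using True by (simp add: field_simps)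
      ultimately have "norm (m (1/2)) = (1 - 1/(2*t1)) * s + (1/(2*t1)) * f1" unfolding f1_def s_def
        using scaled_add[OF C1, of "1 - 1/(2*t1)" "1/(2*t1)"] t1r by simp
      hence "t1 * t1 * (2 * norm (m (1/2))) = t1 * t1 * (s + r)" unfolding F1 using t1r by (simp add: field_simps)
      thus ?thesis using t1r by simp
    next
      case False
      obtain z where z: "z = (1/2)/(1-t2)" by blast
      have hz: "z * (1 - t2) = 1/2" using z t2r by simp
      have "(1 - z) + z * t2 = 1 - z * (1 - t2)" by (rule lin)
      hence hz2: "(1 - z) + z * t2 = 1/2" using hz by simp
      have "m (1/2) = (1 - z) *\<^sub>R b + z *\<^sub>R m t2" using mB[of z t2, unfolded hz2] by simp
      moreover have "z \<le> 1"
      proof -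
        have h: "1/2 \<le> 1 - t2" using False t12 by simp
        have "0 < 1 - t2" using t2r by simp
        thus ?thesis using z h by (simp add: pos_divide_le_eq)
      qed
      moreover have "0 \<le> z" using t2r z by simp
      ultimately have hN: "norm (m (1/2)) = (1 - z) * r + z * f2" unfolding f2_def r_def
        using scaled_add[OF C2, of "1 - z" z] by simp
      have "(1 - t2) * norm (m (1/2)) = (1 - t2) * r - (z * (1 - t2)) * r + (z * (1 - t2)) * f2"
        unfolding hN by (simp add: algebra_simps)
      also have "... = (1 - t2) * r - (1/2) * r + (1/2) * ((1 - t2) * s + t2 * r)" unfolding hz F2 by simp
      also have "... = (1 - t2) * ((s + r) / 2)" by (simp add: field_simps)
      finally have "(1 - t2) * norm (m (1/2)) = (1 - t2) * ((s + r) / 2)" .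
      moreover have ne: "1 - t2 \<noteq> 0" using t2r by simp
      ultimately show ?thesis using mult_left_cancel[OF ne] by blast
    qed
    have "a + b = 2 *\<^sub>R m (1/2)" unfolding m_def by (simp add: algebra_simps scaleR_2)
    hence "norm (a + b) = 2 * norm (m (1/2))" by simp
    thus ?thesis using half s_def r_def by simp
  qed
qed

lemma nonspan:
  fixes x c :: "'b::real_vector"
  assumes x0: "x \<noteq> 0" and c: "c \<notin> span {x}"
  shows "x + t *\<^sub>R (c - x) \<noteq> 0"
proof
  assume h: "x + t *\<^sub>R (c - x) = 0"
  show False
  proof (cases "t = 0")
    case True thus False using h x0 by simp
  next
    case False
    have tc: "t *\<^sub>R c = (t - 1) *\<^sub>R x" using h by (simp add: algebra_simps)
    have "c = (1/t) *\<^sub>R (t *\<^sub>R c)" using False by simp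
    also have "... = (1/t) *\<^sub>R ((t - 1) *\<^sub>R x)" using tc by simp
    finally have "c = (1/t) *\<^sub>R ((t - 1) *\<^sub>R x)" .
    hence "c \<in> span {x}" using span_scale[OF span_scale[OF span_base[of x "{x}"], of "t - 1"], of "1/t"] by simp
    thus False using c by simp
  qed
qed

lemma add_on_K:
  fixes K :: "'b::real_normed_vector set"
  assumes cK: "convex K" and parK: "\<And>a b. a\<in>K \<Longrightarrow> b\<in>K \<Longrightarrow> parallel_pair a b"
    and ndim: "dim (span K) \<noteq> 1"
    and a: "a \<in> K" and b: "b \<in> K"
  shows "norm (a + b) = norm a + norm b"
proof -
  have seg: "a' + t *\<^sub>R (b' - a') \<in> K" if "a'\<in>K" "b'\<in>K" "t\<in>{0..1}" for a' b' t
  proof -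
    have "(1 - t) *\<^sub>R a' + t *\<^sub>R b' \<in> K" using convexD[OF cK that(1,2), of "1-t" t] that(3) by simp
    thus ?thesis by (simp add: algebra_simps)
  qed
  have addA: "norm (a' + b') = norm a' + norm b'"
    if "a'\<in>K" "b'\<in>K" "\<And>t. t\<in>{0..1} \<Longrightarrow> a' + t *\<^sub>R (b' - a') \<noteq> 0" for a' b'
    by (rule indep_add) (use seg parK that in auto)
  show ?thesis
  proof (cases "a = 0 \<or> b = 0")
    case True then show ?thesis by auto
  next
    case False
    hence a0: "a \<noteq> 0" and b0: "b \<noteq> 0" by auto
    show ?thesis
    proof (cases "\<forall>t\<in>{0..1}. a + t *\<^sub>R (b - a) \<noteq> 0")
      case True thus ?thesis using addA a b by blast
    next
      case False
      then obtain t where t: "t\<in>{0..1}" "a + t *\<^sub>R (b - a) = 0" by auto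
      have tn0: "t \<noteq> 0" using t a0 by auto
      have tn1: "t \<noteq> 1" using t b0 by auto
      have t01: "0 < t" "t < 1" using t tn0 tn1 by auto
      define l where "l = (1 - t) / t"
      have l0: "l > 0" unfolding l_def using t01 by simp
      have "t *\<^sub>R b = - ((1 - t) *\<^sub>R a)" using t(2) by (simp add: algebra_simps)
      hence "(1/t) *\<^sub>R (t *\<^sub>R b) = (1/t) *\<^sub>R (- ((1 - t) *\<^sub>R a))" by simp
      hence bl: "b = (- l) *\<^sub>R a" unfolding l_def using t01 by simp
      obtain c where c: "c \<in> K" "c \<notin> span {a}"
      proof (rule ccontr)
        assume "\<not> thesis"
        hence sub: "K \<subseteq> span {a}" using that by blast
        have "span K \<subseteq> span {a}" using span_mono[OF sub] by (simp only: span_span)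
        moreover have "span {a} \<subseteq> span K" using a by (intro span_mono) auto
        ultimately have "span K = span {a}" by blast
        hence "dim (span K) = dim {a}" by (metis dim_span)
        moreover have "dim {a} = 1" using dim_eq_card_independent[of "{a}"] a0 by (simp add: independent_insert)
        ultimately show False using ndim by simp
      qed
      have ac: "norm (a + c) = norm a + norm c" by (rule addA[OF a c(1)]) (use nonspan[OF a0 c(2)] in auto)
      define d where "d = (1/2) *\<^sub>R (a + c)"
      have hh: "(1/2) *\<^sub>R a + (1/2) *\<^sub>R a = a"
        by (metis scaleR_add_left field_sum_of_halves scaleR_one)
      have "a + (1/2) *\<^sub>R (c - a) = ((1/2) *\<^sub>R a + (1/2) *\<^sub>R a) + (1/2) *\<^sub>R (c - a)" using hh by simp
      also have "... = d" unfolding d_def by (simp add: algebra_simps)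
      finally have "a + (1/2) *\<^sub>R (c - a) = d" .
      hence dK: "d \<in> K" using seg[OF a c(1), of "1/2"] by simp
      have dns: "d \<notin> span {b}"
      proof
        assume "d \<in> span {b}"
        then obtain k where "d = k *\<^sub>R b" by (auto simp: span_singleton)
        hence "d = (- k * l) *\<^sub>R a" using bl by simp
        hence "d \<in> span {a}" using span_scale[OF span_base[of a "{a}"], of "- k * l"] by simp
        hence "2 *\<^sub>R d - a \<in> span {a}" using span_diff[OF span_scale[of d "{a}" 2] span_base[of a "{a}"]] by simp
        moreover have "2 *\<^sub>R d - a = c" unfolding d_def by (simp add: algebra_simps)
        ultimately show False using c(2) by simp
      qed
      have bd: "norm (b + d) = norm b + norm d" by (rule addA[OF b dK]) (use nonspan[OF b0 dns] in auto)
      have "norm ((1/l) *\<^sub>R b + 2 *\<^sub>R d) = (1/l) * norm b + 2 * norm d"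
        by (rule scaled_add[OF bd]) (use l0 in auto)
      moreover have "(1/l) *\<^sub>R b + 2 *\<^sub>R d = c" unfolding bl d_def using l0 by (simp add: algebra_simps)
      moreover have "norm b = l * norm a" unfolding bl using l0 by simp
      moreover have "2 * norm d = norm a + norm c" unfolding d_def using ac by simp
      ultimately have "norm c = norm a + norm a + norm c" using l0 by simp
      hence "a = 0" by simp
      thus ?thesis using a0 by simp
    qed
  qed
qed

lemma g_le:
  assumes "bounded_linear g" "onorm g = 1"
  shows "g y \<le> norm y"
  using onorm[OF assms(1), of y] assms(2) by simp

theorem mainTheorem11:
  fixes T :: "'a::real_normed_vector \<Rightarrow> 'b::real_normed_vector"
    and F :: "'a set"
  assumes "fin_dim_space TYPE('a)" and "fin_dim_space TYPE('b)"
    and "linear T"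
    and "face_of_ball F"
    and "T ` F \<noteq> {0}"
  shows "(\<forall>x\<in>F. \<forall>y\<in>F. parallel_pair (T x) (T y)) \<longleftrightarrow>
         (dim (span (T ` F)) = 1 \<or>
          (\<exists>u\<in>F. T u \<noteq> 0 \<and> (\<forall>v\<in>F - {x. T x = 0}. Jmap (T u) \<subseteq> Jmap (T v))))"
proof -
  have cF: "convex F" and Fne: "F \<noteq> {}" using assms(4) unfolding face_of_ball_def by auto
  have cK: "convex (T ` F)" using convex_linear_image[OF assms(3) cF] .
  show ?thesis
  proof
    assume P: "\<forall>x\<in>F. \<forall>y\<in>F. parallel_pair (T x) (T y)"
    have parK: "\<And>a b. a\<in>T ` F \<Longrightarrow> b\<in>T ` F \<Longrightarrow> parallel_pair a b" using P by auto
    show "dim (span (T ` F)) = 1 \<or> (\<exists>u\<in>F. T u \<noteq> 0 \<and> (\<forall>v\<in>F - {x. T x = 0}. Jmap (T u) \<subseteq> Jmap (T v)))"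
    proof (cases "dim (span (T ` F)) = 1")
      case True then show ?thesis by simp
    next
      case ndim: False
      have add: "norm (T x + T y) = norm (T x) + norm (T y)" if "x \<in> F" "y \<in> F" for x y
        using add_on_K[OF cK parK ndim] that by blast
      obtain B :: "'a set" where B: "finite B" "span B = UNIV" using assms(1) unfolding fin_dim_space_def by blast
      obtain u where uF: "u \<in> F" and ri: "\<forall>v\<in>F. \<exists>\<delta>>0. u + \<delta> *\<^sub>R (u - v) \<in> F"
        using relint_pt[OF B cF Fne] by blast
      have key: "\<exists>\<delta>>0. \<exists>w\<in>F. (1 + \<delta>) *\<^sub>R T u = T w + \<delta> *\<^sub>R T v" if vF: "v \<in> F" for v
      proof -
        obtain \<delta> where d: "\<delta> > 0" "u + \<delta> *\<^sub>R (u - v) \<in> F" using ri vF by blast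
        have "T (u + \<delta> *\<^sub>R (u - v)) = T u + \<delta> *\<^sub>R (T u - T v)"
          using assms(3) by (simp add: linear_add linear_diff linear_scale)
        hence "(1 + \<delta>) *\<^sub>R T u = T (u + \<delta> *\<^sub>R (u - v)) + \<delta> *\<^sub>R T v" by (simp add: algebra_simps)
        thus ?thesis using d by blast
      qed
      have Tu0: "T u \<noteq> 0"
      proof
        assume Tu: "T u = 0"
        have "\<exists>v\<in>F. T v \<noteq> 0"
        proof (rule ccontr)
          assume "\<not> (\<exists>v\<in>F. T v \<noteq> 0)"
          hence "T ` F = {0}" using Fne by auto
          thus False using assms(5) by simp
        qed
        then obtain v where vF: "v \<in> F" and Tv: "T v \<noteq> 0" by blast
        obtain \<delta> w where d: "\<delta> > 0" "w \<in> F" "(1 + \<delta>) *\<^sub>R T u = T w + \<delta> *\<^sub>R T v" using key[OF vF] by blast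
        have Tw: "T w = - (\<delta> *\<^sub>R T v)" using d(3) Tu by (simp add: eq_neg_iff_add_eq_0)
        have "norm (T w + T v) = norm (T w) + norm (T v)" using add[OF d(2) vF] .
        moreover have "T w + T v = (1 - \<delta>) *\<^sub>R T v" using Tw by (simp add: algebra_simps)
        moreover have "norm (T w) = \<delta> * norm (T v)" using Tw d(1) by simp
        moreover have "norm ((1 - \<delta>) *\<^sub>R T v) = \<bar>1 - \<delta>\<bar> * norm (T v)" by simp
        ultimately have "\<bar>1 - \<delta>\<bar> * norm (T v) = (\<delta> + 1) * norm (T v)" by (simp add: distrib_right)
        hence "\<bar>1 - \<delta>\<bar> = \<delta> + 1" using Tv by simp
        thus False using d(1) by linarith
      qed
      have J: "Jmap (T u) \<subseteq> Jmap (T v)" if vF: "v \<in> F" for v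
      proof
        fix g assume g: "g \<in> Jmap (T u)"
        hence bl: "bounded_linear g" and on: "onorm g = 1" and gu: "g (T u) = norm (T u)" unfolding Jmap_def by auto
        obtain \<delta> w where d: "\<delta> > 0" "w \<in> F" "(1 + \<delta>) *\<^sub>R T u = T w + \<delta> *\<^sub>R T v" using key[OF vF] by blast
        have "norm (1 *\<^sub>R T w + \<delta> *\<^sub>R T v) = 1 * norm (T w) + \<delta> * norm (T v)"
          by (rule scaled_add[OF add[OF d(2) vF]]) (use d in auto)
        hence n1: "(1 + \<delta>) * norm (T u) = norm (T w) + \<delta> * norm (T v)"
          using arg_cong[OF d(3), of norm] d(1) by simp
        have "(1 + \<delta>) * g (T u) = g (T w) + \<delta> * g (T v)"
          using arg_cong[OF d(3), of g] bl by (simp add: linear_add linear_scale bounded_linear.linear)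
        moreover have "g (T w) \<le> norm (T w)" by (rule g_le[OF bl on])
        moreover have "(1 + \<delta>) * g (T u) = (1 + \<delta>) * norm (T u)" using gu by simp
        ultimately have "\<delta> * norm (T v) \<le> \<delta> * g (T v)" using n1 by linarith
        hence "norm (T v) \<le> g (T v)" using d(1) by simp
        moreover have "g (T v) \<le> norm (T v)" by (rule g_le[OF bl on])
        ultimately have "g (T v) = norm (T v)" by simp
        thus "g \<in> Jmap (T v)" using bl on unfolding Jmap_def by simp
      qed
      show ?thesis using uF Tu0 J by blast
    qed
  next
    assume H: "dim (span (T ` F)) = 1 \<or> (\<exists>u\<in>F. T u \<noteq> 0 \<and> (\<forall>v\<in>F - {x. T x = 0}. Jmap (T u) \<subseteq> Jmap (T v)))"
    show "\<forall>x\<in>F. \<forall>y\<in>F. parallel_pair (T x) (T y)"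
    proof (intro ballI)
      fix x y assume xF: "x \<in> F" and yF: "y \<in> F"
      from H show "parallel_pair (T x) (T y)"
      proof
        assume d1: "dim (span (T ` F)) = 1"
        obtain Bs where Bs: "Bs \<subseteq> span (T ` F)" "independent Bs" "span (T ` F) \<subseteq> span Bs" "card Bs = dim (span (T ` F))"
          by (rule basis_exists)
        then obtain w where w: "Bs = {w}" using d1 by (auto simp: card_Suc_eq)
        have "T x \<in> span {w}" "T y \<in> span {w}" using Bs(3) w xF yF span_base[of _ "T ` F"] by blast+
        then obtain \<alpha> \<beta> where ab: "T x = \<alpha> *\<^sub>R w" "T y = \<beta> *\<^sub>R w" by (auto simp: span_singleton)
        show ?thesis unfolding parallel_pair_def
        proof (cases "0 \<le> \<alpha> * \<beta>")
          case True
          have "\<bar>\<alpha> + \<beta>\<bar> = \<bar>\<alpha>\<bar> + \<bar>\<beta>\<bar>" using True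
            by (smt (verit) mult_nonneg_nonpos mult_nonpos_nonneg mult_pos_neg mult_neg_pos zero_le_mult_iff)
          hence "norm (T x + 1 *\<^sub>R T y) = norm (T x) + norm (T y)" unfolding ab
            by (simp add: scaleR_add_left[symmetric] distrib_right del: scaleR_add_left)
          thus "\<exists>c::real. \<bar>c\<bar> = 1 \<and> norm (T x + c *\<^sub>R T y) = norm (T x) + norm (T y)" by (intro exI[of _ 1]) simp
        next
          case False
          have "\<bar>\<alpha> - \<beta>\<bar> = \<bar>\<alpha>\<bar> + \<bar>\<beta>\<bar>" using False
            by (smt (verit) mult_nonneg_nonneg mult_nonpos_nonpos)
          hence "norm (T x + (-1) *\<^sub>R T y) = norm (T x) + norm (T y)" unfolding ab
            by (simp add: scaleR_diff_left[symmetric] distrib_right del: scaleR_diff_left)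
          thus "\<exists>c::real. \<bar>c\<bar> = 1 \<and> norm (T x + c *\<^sub>R T y) = norm (T x) + norm (T y)" by (intro exI[of _ "-1"]) simp
        qed
      next
        assume "\<exists>u\<in>F. T u \<noteq> 0 \<and> (\<forall>v\<in>F - {x. T x = 0}. Jmap (T u) \<subseteq> Jmap (T v))"
        then obtain u where uF: "u \<in> F" and Tu: "T u \<noteq> 0" and J: "\<forall>v\<in>F - {x. T x = 0}. Jmap (T u) \<subseteq> Jmap (T v)"
          by blast
        show ?thesis unfolding parallel_pair_def
        proof (intro exI[of _ 1] conjI)
          show "\<bar>1::real\<bar> = 1" by simp
          show "norm (T x + 1 *\<^sub>R T y) = norm (T x) + norm (T y)"
          proof (cases "T x = 0 \<or> T y = 0")
            case True thus ?thesis by auto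
          next
            case False
            obtain g where g: "bounded_linear g" "onorm g = 1" "g (T u) = norm (T u)"
              using hb_fin[OF assms(2) Tu] by blast
            hence gJ: "g \<in> Jmap (T u)" unfolding Jmap_def by simp
            have "g \<in> Jmap (T x)" "g \<in> Jmap (T y)" using J gJ xF yF False by auto
            hence gx: "g (T x) = norm (T x)" and gy: "g (T y) = norm (T y)" unfolding Jmap_def by auto
            have "g (T x + T y) = norm (T x) + norm (T y)"
              using gx gy g(1) by (simp add: linear_add bounded_linear.linear)
            moreover have "g (T x + T y) \<le> norm (T x + T y)" by (rule g_le[OF g(1,2)])
            moreover have "norm (T x + T y) \<le> norm (T x) + norm (T y)" by (rule norm_triangle_ineq)
            ultimately show ?thesis by simp
          qed
        qed
      qed
    qed
  qed
qed

end
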